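(* Let $\mathcal C\subset\mathbb R^d$ be a convex compact set, $H=\operatorname{aff}(\mathcal C)$ with direction $V$, and $\Omega$ a proper l.s.c. convex function on $\mathbb R^d$ with $\operatorname{dom}(\Omega)=\mathcal C$ whose restriction to $H$ is Legendre-type (with respect to the metric of $H$). Then there exists a Legendre-type function $\Psi:\mathbb R^d\to\mathbb R\cup\{+\infty\}$ with $\mathcal C\subset\operatorname{cl}(\operatorname{int}(\operatorname{dom}\Psi))$ and $\operatorname{int}(\operatorname{dom}\Psi)\cap\mathcal C\neq\emptyset$, such that $\Omega=\Psi+\mathbb I_{\mathcal C}$ and $\operatorname{dom}(\Psi^* )=\mathbb R^d$, and such that for every $\theta\in\mathbb R^d$ there exists $z\in V^\perp$ with $\nabla\Psi(\nabla\Omega^*(\theta))=\theta+z$.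
   Context: A function is Legendre-type if it is strictly convex on the interior of its domain and essentially smooth (nonempty interior of domain, differentiable there, gradient norm tending to $+\infty$ at the boundary of the domain); for a restriction to $H$ this is understood with respect to the metric of $H$. $\mathbb I_{\mathcal C}$ is the indicator function of $\mathcal C$ and ${}^*$ denotes Fenchel conjugation. *)

theory Defs
  imports "HOL-Analysis.Analysis"
begin

definition edom :: "('a \<Rightarrow> ereal) \<Rightarrow> 'a set" where
  "edom f = {x. f x < \<infinity>}"

definition proper_fun :: "('a \<Rightarrow> ereal) \<Rightarrow> bool" where
  "proper_fun f \<longleftrightarrow> (\<forall>x. f x \<noteq> -\<infinity>) \<and> edom f \<noteq> {}"

definition econvex :: "('a::real_vector \<Rightarrow> ereal) \<Rightarrow> bool" where
  "econvex f \<longleftrightarrow> convex {(x, t::real). f x \<le> ereal t}"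

definition elsc :: "('a::topological_space \<Rightarrow> ereal) \<Rightarrow> bool" where
  "elsc f \<longleftrightarrow> (\<forall>x. f x \<le> Liminf (at x) f)"

definition fenchel_conj :: "('a::real_inner \<Rightarrow> ereal) \<Rightarrow> 'a \<Rightarrow> ereal" where
  "fenchel_conj f \<theta> = (SUP x. ereal (\<theta> \<bullet> x) - f x)"

definition eindicator :: "'a set \<Rightarrow> 'a \<Rightarrow> ereal" where
  "eindicator C x = (if x \<in> C then 0 else \<infinity>)"

definition dir :: "'a::real_vector set \<Rightarrow> 'a set" where
  "dir H = {y - z | y z. y \<in> H \<and> z \<in> H}"

definition int_in :: "'a::topological_space set \<Rightarrow> 'a set \<Rightarrow> 'a set" where
  "int_in H S = {x. \<exists>T. openin (top_of_set H) T \<and> x \<in> T \<and> T \<subseteq> S}"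

definition has_grad_in :: "'a::euclidean_space set \<Rightarrow> ('a \<Rightarrow> ereal) \<Rightarrow> 'a \<Rightarrow> 'a \<Rightarrow> bool" where
  "has_grad_in H f g x \<longleftrightarrow> g \<in> dir H \<and> f x \<noteq> \<infinity> \<and> f x \<noteq> -\<infinity> \<and>
     ((\<lambda>y. real_of_ereal (f y)) has_derivative (\<lambda>h. g \<bullet> h)) (at x within H)"

definition grad_in :: "'a::euclidean_space set \<Rightarrow> ('a \<Rightarrow> ereal) \<Rightarrow> 'a \<Rightarrow> 'a" where
  "grad_in H f x = (SOME g. has_grad_in H f g x)"

text \<open>Legendre type of the restriction of f to the affine set H, w.r.t. the metric of H.
  The domain of the restriction is edom f \<inter> H; its interior is taken relative to H.\<close>
definition legendre_in :: "'a::euclidean_space set \<Rightarrow> ('a \<Rightarrow> ereal) \<Rightarrow> bool" where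
  "legendre_in H f \<longleftrightarrow>
     (let D = edom f \<inter> H; I = int_in H D in
       I \<noteq> {} \<and>
       (\<forall>x\<in>I. \<exists>g. has_grad_in H f g x) \<and>
       (\<forall>x\<in>I. \<forall>y\<in>I. x \<noteq> y \<longrightarrow> (\<forall>u::real. 0 < u \<and> u < 1 \<longrightarrow>
          f (u *\<^sub>R x + (1 - u) *\<^sub>R y) < ereal u * f x + ereal (1 - u) * f y)) \<and>
       (\<forall>s x. (\<forall>k. s k \<in> I) \<longrightarrow> s \<longlonglongrightarrow> x \<longrightarrow> x \<in> closure D - I \<longrightarrow>
          filterlim (\<lambda>k. norm (grad_in H f (s k))) at_top sequentially))"

abbreviation legendre :: "('a::euclidean_space \<Rightarrow> ereal) \<Rightarrow> bool" where
  "legendre f \<equiv> legendre_in UNIV f"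

end

theory Submission
  imports Defs
begin

lemma elsc_local:
  fixes f :: "'a::metric_space \<Rightarrow> ereal"
  assumes "elsc f" "c < f x"
  shows "\<exists>e>0. \<forall>y\<in>ball x e. c < f y"
proof -
  have "c < Liminf (at x) f" using assms unfolding elsc_def by (meson order_less_le_trans)
  then obtain e where e: "e > 0" "c < (INF y\<in>(ball x e - {x}). f y)"
    unfolding Liminf_at by (auto simp: less_SUP_iff)
  have "\<forall>y\<in>ball x e. c < f y"
  proof
    fix y assume "y \<in> ball x e"
    then show "c < f y" using e assms(2) by (cases "y = x") (auto simp: less_INF_D)
  qed
  with e show ?thesis by blast
qed

lemma lsc_min:
  fixes f :: "'a::metric_space \<Rightarrow> real"
  assumes K: "compact K" "K \<noteq> {}"
    and lsc: "\<And>x c. x \<in> K \<Longrightarrow> c < f x \<Longrightarrow> \<exists>e>0. \<forall>y\<in>K \<inter> ball x e. c < f y"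
  shows "\<exists>x\<in>K. \<forall>y\<in>K. f x \<le> f y"
proof (rule ccontr)
  assume "\<not> ?thesis"
  then have "\<forall>x\<in>K. \<exists>y\<in>K. f y < f x" by (auto simp: not_le)
  then obtain Y where Y: "\<And>x. x \<in> K \<Longrightarrow> Y x \<in> K \<and> f (Y x) < f x" by metis
  have "\<forall>x\<in>K. \<exists>e>0. \<forall>y\<in>K \<inter> ball x e. f (Y x) < f y"
    using lsc Y by blast
  then obtain e where e: "\<And>x. x \<in> K \<Longrightarrow> e x > 0 \<and> (\<forall>y\<in>K \<inter> ball x (e x). f (Y x) < f y)"
    by metis
  have "K \<subseteq> (\<Union>x\<in>K. ball x (e x))" using e by force
  then obtain F where F: "F \<subseteq> K" "finite F" "K \<subseteq> (\<Union>x\<in>F. ball x (e x))"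
    using compactE_image[OF K(1), of K "\<lambda>x. ball x (e x)"] by blast
  then have "F \<noteq> {}" using K(2) by auto
  define m where "m = Min ((\<lambda>x. f (Y x)) ` F)"
  have "m \<in> (\<lambda>x. f (Y x)) ` F" unfolding m_def using F \<open>F \<noteq> {}\<close> by (intro Min_in) auto
  then obtain x0 where x0: "x0 \<in> F" "m = f (Y x0)" by auto
  have "Y x0 \<in> K" using Y x0 F by auto
  then obtain x1 where x1: "x1 \<in> F" "Y x0 \<in> ball x1 (e x1)" using F by auto
  have "f (Y x1) < f (Y x0)" using e[of x1] x1 F \<open>Y x0 \<in> K\<close> by auto
  moreover have "m \<le> f (Y x1)" unfolding m_def using F x1 by (intro Min_le) auto
  ultimately show False using x0 by simp
qed


locale P5 =
  fixes C :: "'a::euclidean_space set" and \<Omega> :: "'a \<Rightarrow> ereal"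
  assumes cvx: "convex C" and cpt: "compact C" and prp: "proper_fun \<Omega>"
    and lsc: "elsc \<Omega>" and ecvx: "econvex \<Omega>" and dom: "edom \<Omega> = C"
    and leg: "legendre_in (affine hull C) \<Omega>"
begin

abbreviation "H \<equiv> affine hull C"
definition "V = dir H"
definition "\<omega> x = real_of_ereal (\<Omega> x)"
abbreviation "RI \<equiv> rel_interior C"

lemma C_ne: "C \<noteq> {}" using prp dom unfolding proper_fun_def by auto

lemma Om_C: "x \<in> C \<Longrightarrow> \<Omega> x = ereal (\<omega> x)"
  using prp dom unfolding proper_fun_def edom_def \<omega>_def by (cases "\<Omega> x") auto

lemma Om_nC: "x \<notin> C \<Longrightarrow> \<Omega> x = \<infinity>"
  using dom unfolding edom_def by (cases "\<Omega> x") auto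

lemma Om_ne_minf: "\<Omega> x \<noteq> -\<infinity>" using prp unfolding proper_fun_def by auto

lemma D_eq: "edom \<Omega> \<inter> H = C" unfolding dom by (rule inf_absorb1[OF hull_subset])

lemma I_eq: "int_in H (edom \<Omega> \<inter> H) = RI"
  unfolding D_eq int_in_def rel_interior_def by (rule refl)

lemma clD: "closure (edom \<Omega> \<inter> H) = C"
  unfolding D_eq using cpt by (simp add: compact_imp_closed)

lemma legE:
  "RI \<noteq> {} \<and> (\<forall>x\<in>RI. \<exists>g. has_grad_in H \<Omega> g x) \<and>
   (\<forall>x\<in>RI. \<forall>y\<in>RI. x \<noteq> y \<longrightarrow> (\<forall>u::real. 0 < u \<and> u < 1 \<longrightarrow>
          \<Omega> (u *\<^sub>R x + (1 - u) *\<^sub>R y) < ereal u * \<Omega> x + ereal (1 - u) * \<Omega> y)) \<and>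
   (\<forall>s x. (\<forall>k. s k \<in> RI) \<longrightarrow> s \<longlonglongrightarrow> x \<longrightarrow> x \<in> C - RI \<longrightarrow>
          filterlim (\<lambda>k. norm (grad_in H \<Omega> (s k))) at_top sequentially)"
  using leg unfolding legendre_in_def Let_def I_eq clD .

lemma RI_ne: "RI \<noteq> {}"
  using legE by blast

lemma RI_C: "x \<in> RI \<Longrightarrow> x \<in> C" using rel_interior_subset by blast

lemma grad_ex: "x \<in> RI \<Longrightarrow> \<exists>g. has_grad_in H \<Omega> g x"
  using legE by blast

lemma conv:
  assumes "x \<in> C" "y \<in> C" "0 \<le> t" "t \<le> 1"
  shows "(1 - t) *\<^sub>R x + t *\<^sub>R y \<in> C" "\<omega> ((1 - t) *\<^sub>R x + t *\<^sub>R y) \<le> (1 - t) * \<omega> x + t * \<omega> y"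
proof -
  show inC: "(1 - t) *\<^sub>R x + t *\<^sub>R y \<in> C" using convexD[OF cvx assms(1,2)] assms by auto
  have E: "convex {(x, t::real). \<Omega> x \<le> ereal t}" using ecvx unfolding econvex_def .
  have "(x, \<omega> x) \<in> {(x, t::real). \<Omega> x \<le> ereal t}" "(y, \<omega> y) \<in> {(x, t::real). \<Omega> x \<le> ereal t}"
    using Om_C assms by auto
  from convexD[OF E this, of "1 - t" t] assms
  have "\<Omega> ((1 - t) *\<^sub>R x + t *\<^sub>R y) \<le> ereal ((1 - t) * \<omega> x + t * \<omega> y)" by simp
  then show "\<omega> ((1 - t) *\<^sub>R x + t *\<^sub>R y) \<le> (1 - t) * \<omega> x + t * \<omega> y"
    using Om_C[OF inC] by simp
qed

lemma strict:
  assumes "x \<in> RI" "y \<in> RI" "x \<noteq> y" "0 < u" "u < 1"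
  shows "\<omega> (u *\<^sub>R x + (1 - u) *\<^sub>R y) < u * \<omega> x + (1 - u) * \<omega> y"
proof -
  have "\<Omega> (u *\<^sub>R x + (1 - u) *\<^sub>R y) < ereal u * \<Omega> x + ereal (1 - u) * \<Omega> y"
    using legE[THEN conjunct2, THEN conjunct2, THEN conjunct1, rule_format, OF assms(1,2,3)] assms(4,5) by blast
  moreover have "u *\<^sub>R x + (1 - u) *\<^sub>R y \<in> C"
    using convexD[OF cvx RI_C[OF assms(1)] RI_C[OF assms(2)], of u "1-u"] assms by auto
  ultimately show ?thesis unfolding Om_C[OF RI_C[OF assms(1)]] Om_C[OF RI_C[OF assms(2)]] Om_C[OF \<open>u *\<^sub>R x + (1 - u) *\<^sub>R y \<in> C\<close>]
    by simp
qed

lemma blow: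
  assumes "\<And>k. s k \<in> RI" "s \<longlonglongrightarrow> x" "x \<in> C" "x \<notin> RI"
  shows "filterlim (\<lambda>k. norm (grad_in H \<Omega> (s k))) at_top sequentially"
  by (rule legE[THEN conjunct2, THEN conjunct2, THEN conjunct2, rule_format]) (use assms in auto)


lemma affH: "affine H" by simp

definition "a0 = (SOME a. a \<in> C)"
lemma a0C: "a0 \<in> C" unfolding a0_def using C_ne by (simp add: some_in_eq)
lemma CH: "x \<in> C \<Longrightarrow> x \<in> H" by (rule hull_inc)
lemma a0H: "a0 \<in> H" using CH a0C by simp

lemma HH_V: "x \<in> H \<Longrightarrow> y \<in> H \<Longrightarrow> x - y \<in> V"
  unfolding V_def dir_def by blast

lemma H_V: "x \<in> H \<Longrightarrow> v \<in> V \<Longrightarrow> x + t *\<^sub>R v \<in> H"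
  unfolding V_def dir_def using mem_affine_3_minus[OF affH] by blast

lemma V_eq: "V = (\<lambda>x. x - a0) ` H"
proof
  show "V \<subseteq> (\<lambda>x. x - a0) ` H"
  proof
    fix v assume "v \<in> V"
    then have "a0 + 1 *\<^sub>R v \<in> H" using H_V a0H by blast
    then show "v \<in> (\<lambda>x. x - a0) ` H" by (intro image_eqI[of _ _ "a0 + v"]) auto
  qed
  show "(\<lambda>x. x - a0) ` H \<subseteq> V" using HH_V a0H by blast
qed

lemma subV: "subspace V"
  unfolding V_eq by (rule affine_diffs_subspace_subtract[OF affH a0H])

lemma H_iff: "x \<in> H \<longleftrightarrow> x - a0 \<in> V"
proof
  assume "x - a0 \<in> V"
  then obtain h where "h \<in> H" "x - a0 = h - a0" unfolding V_eq by blast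
  then show "x \<in> H" by simp
qed (use HH_V a0H in blast)

definition "Pv x = (SOME y. y \<in> V \<and> (\<forall>w\<in>V. (x - y) \<bullet> w = 0))"

lemma Pv_ex: "\<exists>y. y \<in> V \<and> (\<forall>w\<in>V. (x - y) \<bullet> w = 0)"
proof -
  obtain y z where "y \<in> span V" "\<And>w. w \<in> span V \<Longrightarrow> orthogonal z w" "x = y + z"
    using orthogonal_subspace_decomp_exists[of V x] by blast
  moreover have "span V = V" using subV by (simp add: span_eq_iff)
  ultimately show ?thesis
    by (intro exI[of _ y]) (auto simp: orthogonal_def)
qed

lemma Pv: "Pv x \<in> V" "\<And>w. w \<in> V \<Longrightarrow> (x - Pv x) \<bullet> w = 0"
  using someI_ex[OF Pv_ex[of x]] unfolding Pv_def[symmetric] by auto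

lemma Pv_unique:
  assumes "y \<in> V" "\<And>w. w \<in> V \<Longrightarrow> (x - y) \<bullet> w = 0"
  shows "Pv x = y"
proof -
  have d: "Pv x - y \<in> V" using subspace_diff[OF subV Pv(1) assms(1)] .
  have "(Pv x - y) \<bullet> (Pv x - y) = (x - y) \<bullet> (Pv x - y) - (x - Pv x) \<bullet> (Pv x - y)"
    by (simp add: inner_diff_left)
  also have "\<dots> = 0" using assms(2)[OF d] Pv(2)[OF d] by simp
  finally show ?thesis by simp
qed

lemma Pv_V: "v \<in> V \<Longrightarrow> Pv v = v" by (rule Pv_unique) auto

lemma lin_Pv: "linear Pv"
proof
  fix x y show "Pv (x + y) = Pv x + Pv y"
  proof (rule Pv_unique)
    show "Pv x + Pv y \<in> V" using subspace_add[OF subV Pv(1) Pv(1)] .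
    fix w assume "w \<in> V"
    then show "(x + y - (Pv x + Pv y)) \<bullet> w = 0"
      using Pv(2)[of w x] Pv(2)[of w y] by (simp add: algebra_simps inner_diff_left inner_add_left)
  qed
next
  fix c :: real and x show "Pv (c *\<^sub>R x) = c *\<^sub>R Pv x"
  proof (rule Pv_unique)
    show "c *\<^sub>R Pv x \<in> V" using subspace_scale[OF subV Pv(1)] .
    fix w assume "w \<in> V"
    have "c *\<^sub>R x - c *\<^sub>R Pv x = c *\<^sub>R (x - Pv x)" by (simp add: algebra_simps)
    then show "(c *\<^sub>R x - c *\<^sub>R Pv x) \<bullet> w = 0" using Pv(2)[OF \<open>w \<in> V\<close>, of x] by simp
  qed
qed

lemma bl_Pv: "bounded_linear Pv" using lin_Pv linear_conv_bounded_linear by blast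

lemma Pv_inner: "g \<in> V \<Longrightarrow> g \<bullet> Pv h = g \<bullet> h"
proof -
  assume "g \<in> V"
  then have "h \<bullet> g - Pv h \<bullet> g = 0" using Pv(2)[of g h] by (simp add: inner_diff_left)
  then show ?thesis by (simp add: inner_commute)
qed

definition "pr x = a0 + Pv (x - a0)"
definition "Qr x = x - pr x"

lemma pr_H: "pr x \<in> H" unfolding pr_def H_iff using Pv(1) by simp
lemma pr_id: "x \<in> H \<Longrightarrow> pr x = x" unfolding pr_def using Pv_V H_iff by simp
lemma Qr_orth: "w \<in> V \<Longrightarrow> Qr x \<bullet> w = 0"
  unfolding Qr_def pr_def using Pv(2)[of w "x - a0"] by (simp add: algebra_simps)
lemma Qr_H: "x \<in> H \<Longrightarrow> Qr x = 0" unfolding Qr_def using pr_id by simp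

lemma pr_add: "v \<in> V \<Longrightarrow> pr (x + v) = pr x + v"
  unfolding pr_def using linear_add[OF lin_Pv, of "x - a0" v] Pv_V
  by (simp add: algebra_simps)

lemma pr_comb: "pr (u *\<^sub>R x + (1 - u) *\<^sub>R y) = u *\<^sub>R pr x + (1 - u) *\<^sub>R pr y"
proof -
  have "u *\<^sub>R x + (1 - u) *\<^sub>R y - a0 = u *\<^sub>R (x - a0) + (1 - u) *\<^sub>R (y - a0)"
    by (simp add: algebra_simps)
  then have "pr (u *\<^sub>R x + (1 - u) *\<^sub>R y) = a0 + (u *\<^sub>R Pv (x - a0) + (1 - u) *\<^sub>R Pv (y - a0))"
    unfolding pr_def by (simp only: linear_add[OF lin_Pv] linear_scale[OF lin_Pv])
  then show ?thesis unfolding pr_def by (simp add: algebra_simps)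
qed

lemma Qr_comb: "Qr (u *\<^sub>R x + (1 - u) *\<^sub>R y) = u *\<^sub>R Qr x + (1 - u) *\<^sub>R Qr y"
  unfolding Qr_def pr_comb by (simp add: algebra_simps)

lemma pr_alt: "pr = (\<lambda>x. Pv x + (a0 - Pv a0))"
  unfolding pr_def by (rule ext) (simp add: linear_diff[OF lin_Pv])

lemma pr_deriv: "(pr has_derivative Pv) (at x within S)"
  unfolding pr_alt by (rule has_derivative_add_const[OF bounded_linear_imp_has_derivative[OF bl_Pv]])

lemma cont_pr: "continuous_on S pr"
  unfolding pr_alt by (rule continuous_on_add[OF linear_continuous_on[OF bl_Pv] continuous_on_const])

lemma norm_orth: "g \<in> V \<Longrightarrow> norm g \<le> norm (g + Qr x)"
proof -
  assume g: "g \<in> V"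
  have o1: "Qr x \<bullet> g = 0" using Qr_orth[OF g] .
  then have o2: "g \<bullet> Qr x = 0" by (simp only: inner_commute)
  have "(norm (g + Qr x))^2 = (norm g)^2 + (norm (Qr x))^2"
    unfolding power2_norm_eq_inner inner_add_left inner_add_right o1 o2 by simp
  then have "(norm g)^2 \<le> (norm (g + Qr x))^2" by simp
  then show ?thesis by (rule power2_le_imp_le) simp
qed

lemma line_deriv:
  assumes "has_grad_in H \<Omega> g x" "x \<in> H" "v \<in> V"
  shows "((\<lambda>t. \<omega> (x + t *\<^sub>R v)) has_real_derivative (g \<bullet> v)) (at 0)"
proof -
  have d: "((\<lambda>y. real_of_ereal (\<Omega> y)) has_derivative (\<lambda>h. g \<bullet> h)) (at x within H)"
    using assms(1) unfolding has_grad_in_def by blast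
  have l: "((\<lambda>t. x + t *\<^sub>R v) has_derivative (\<lambda>t. t *\<^sub>R v)) (at 0)"
  proof -
    have "((\<lambda>t. t *\<^sub>R v + x) has_derivative (\<lambda>t. t *\<^sub>R v)) (at 0)"
      by (rule has_derivative_add_const[OF bounded_linear_imp_has_derivative[OF bounded_linear_scaleR_left]])
    then show ?thesis by (simp add: add.commute)
  qed
  have sub: "range (\<lambda>t. x + t *\<^sub>R v) \<subseteq> H" using H_V assms by blast
  have d2: "((\<lambda>y. real_of_ereal (\<Omega> y)) has_derivative (\<lambda>h. g \<bullet> h))
      (at ((\<lambda>t. x + t *\<^sub>R v) 0) within range (\<lambda>t. x + t *\<^sub>R v))"
    using has_derivative_subset[OF d sub] by simp
  have "((\<lambda>y. real_of_ereal (\<Omega> y)) \<circ> (\<lambda>t. x + t *\<^sub>R v) has_derivative (\<lambda>h. g \<bullet> h) \<circ> (\<lambda>t. t *\<^sub>R v)) (at 0)"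
    using diff_chain_within[OF l d2] by simp
  moreover have "(\<lambda>h. g \<bullet> h) \<circ> (\<lambda>t. t *\<^sub>R v) = (*) (g \<bullet> v)" by (auto simp: fun_eq_iff)
  ultimately show ?thesis unfolding has_field_derivative_def \<omega>_def comp_def by simp
qed

lemma grad_unique:
  assumes "has_grad_in H \<Omega> g x" "has_grad_in H \<Omega> g' x" "x \<in> H"
  shows "g = g'"
proof -
  have gV: "g \<in> V" "g' \<in> V" using assms unfolding has_grad_in_def V_def by auto
  then have v: "g - g' \<in> V" using subspace_diff[OF subV] by blast
  have "g \<bullet> (g - g') = g' \<bullet> (g - g')"
    using DERIV_unique[OF line_deriv[OF assms(1,3) v] line_deriv[OF assms(2,3) v]] .
  then have "(g - g') \<bullet> (g - g') = 0" by (simp add: inner_diff_left)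
  then show ?thesis by simp
qed

lemma grad_RI: "x \<in> RI \<Longrightarrow> has_grad_in H \<Omega> (grad_in H \<Omega> x) x"
  unfolding grad_in_def using grad_ex by (rule someI_ex) 

lemma grad_RI_eq: "x \<in> RI \<Longrightarrow> has_grad_in H \<Omega> g x \<Longrightarrow> grad_in H \<Omega> x = g"
  using grad_unique grad_RI CH RI_C by blast

lemma grad_V: "has_grad_in H \<Omega> g x \<Longrightarrow> g \<in> V"
  unfolding has_grad_in_def V_def by blast

lemma subgrad:
  assumes "x \<in> C" "has_grad_in H \<Omega> g x" "w \<in> C"
  shows "\<omega> x + g \<bullet> (w - x) \<le> \<omega> w"
proof -
  define h where "h t = \<omega> (x + t *\<^sub>R (w - x))" for t
  have D: "(h has_real_derivative (g \<bullet> (w - x))) (at 0)"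
    unfolding h_def using line_deriv[OF assms(2) CH[OF assms(1)] HH_V[OF CH[OF assms(3)] CH[OF assms(1)]]] .
  have h0: "h 0 = \<omega> x" unfolding h_def by simp
  have T: "((\<lambda>t. (h t - h 0) / (t - 0)) \<longlongrightarrow> g \<bullet> (w - x)) (at_right 0)"
    using D unfolding has_field_derivative_iff by (rule tendsto_within_subset) auto
  have ev: "eventually (\<lambda>t. (h t - h 0) / (t - 0) \<le> \<omega> w - \<omega> x) (at_right 0)"
    unfolding eventually_at_right_field
  proof (intro exI[of _ 1] conjI allI impI)
    fix t :: real assume t: "0 < t" "t < 1"
    have "x + t *\<^sub>R (w - x) = (1 - t) *\<^sub>R x + t *\<^sub>R w" by (simp add: algebra_simps)
    then have "h t \<le> (1 - t) * \<omega> x + t * \<omega> w" unfolding h_def using conv(2)[OF assms(1,3), of t] t by simp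
    then have "h t - h 0 \<le> t * (\<omega> w - \<omega> x)" using h0 by (simp add: algebra_simps)
    then show "(h t - h 0) / (t - 0) \<le> \<omega> w - \<omega> x" using t by (simp add: divide_simps mult.commute)
  qed simp
  have "g \<bullet> (w - x) \<le> \<omega> w - \<omega> x"
    by (rule tendsto_upperbound[OF T ev]) simp
  then show ?thesis by simp
qed


definition "phi \<theta> x = \<theta> \<bullet> x - \<omega> x"

lemma lsc_phi:
  assumes "x \<in> C" "c < - phi \<theta> x"
  shows "\<exists>e>0. \<forall>y\<in>C \<inter> ball x e. c < - phi \<theta> y"
proof -
  define d where "d = \<omega> x - \<theta> \<bullet> x - c"
  have d: "d > 0" using assms unfolding d_def phi_def by simp
  have "ereal (\<omega> x - d/2) < \<Omega> x" using Om_C[OF assms(1)] d by simp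
  then obtain e1 where e1: "e1 > 0" "\<forall>y\<in>ball x e1. ereal (\<omega> x - d/2) < \<Omega> y"
    using elsc_local[OF lsc] by blast
  define e where "e = min e1 (d / (2 * (norm \<theta> + 1)))"
  have n: "0 < 2 * (norm \<theta> + 1)" by (smt (verit) norm_ge_zero)
  have e: "e > 0" unfolding e_def using e1 d n by simp
  have "\<forall>y\<in>C \<inter> ball x e. c < - phi \<theta> y"
  proof
    fix y assume y: "y \<in> C \<inter> ball x e"
    then have "y \<in> ball x e1" unfolding e_def by auto
    then have "ereal (\<omega> x - d/2) < \<Omega> y" using e1(2) by blast
    moreover have "\<Omega> y = ereal (\<omega> y)" using Om_C y by blast
    ultimately have "\<omega> x - d/2 < \<omega> y" by simp
    have "\<theta> \<bullet> (y - x) \<le> norm \<theta> * norm (y - x)" by (rule norm_cauchy_schwarz)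
    also have "\<dots> \<le> (norm \<theta> + 1) * e" 
      using y by (intro mult_mono) (auto simp: dist_norm norm_minus_commute)
    also have "\<dots> \<le> (norm \<theta> + 1) * (d / (2 * (norm \<theta> + 1)))"
      unfolding e_def by (intro mult_left_mono) auto
    also have "\<dots> = d / 2" using n by (simp add: field_simps)
    finally have "\<theta> \<bullet> (y - x) \<le> d / 2" .
    then have A: "\<theta> \<bullet> y \<le> \<theta> \<bullet> x + d/2" by (simp add: inner_diff_right)
    have B: "- phi \<theta> y = \<omega> y - \<theta> \<bullet> y" by (simp add: phi_def)
    have Cc: "c = \<omega> x - \<theta> \<bullet> x - d" by (simp add: d_def)
    show "c < - phi \<theta> y" unfolding B Cc using A \<open>\<omega> x - d/2 < \<omega> y\<close> by linarith
  qed
  then show ?thesis using e by blast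
qed

lemma max_on:
  assumes "compact K" "K \<noteq> {}" "K \<subseteq> C"
  shows "\<exists>p\<in>K. \<forall>x\<in>K. phi \<theta> x \<le> phi \<theta> p"
proof -
  have "\<exists>x\<in>K. \<forall>y\<in>K. - phi \<theta> x \<le> - phi \<theta> y"
  proof (rule lsc_min[OF assms(1,2)])
    fix x c assume "x \<in> K" "c < - phi \<theta> x"
    then obtain e where "e > 0" "\<forall>y\<in>C \<inter> ball x e. c < - phi \<theta> y"
      using lsc_phi assms(3) by blast
    then show "\<exists>e>0. \<forall>y\<in>K \<inter> ball x e. c < - phi \<theta> y" using assms(3) by blast
  qed
  then show ?thesis by auto
qed

lemma max_RI:
  assumes pC: "p \<in> C" and pmax: "\<forall>x\<in>C. phi \<theta> x \<le> phi \<theta> p"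
  shows "p \<in> RI"
proof (rule ccontr)
  assume pn: "p \<notin> RI"
  obtain y where yRI: "y \<in> RI" using RI_ne by blast
  have yC: "y \<in> C" using RI_C[OF yRI] .
  obtain gy where gy: "has_grad_in H \<Omega> gy y" using grad_ex[OF yRI] by blast
  have "continuous (at y within H) (\<lambda>y. real_of_ereal (\<Omega> y))"
    using gy unfolding has_grad_in_def by (blast intro: has_derivative_continuous)
  then obtain r2 where r2: "r2 > 0" "\<forall>w\<in>H. dist w y < r2 \<longrightarrow> dist (\<omega> w) (\<omega> y) < 1"
    unfolding continuous_within_eps_delta \<omega>_def by (meson zero_less_one)
  obtain r1 where r1: "r1 > 0" "ball y r1 \<inter> H \<subseteq> C"
    using yRI unfolding rel_interior_ball by blast
  define r where "r = min r1 r2"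
  have r: "r > 0" unfolding r_def using r1 r2 by simp
  define K where "K = \<omega> y + 1 - \<omega> p - \<theta> \<bullet> (y - p)"
  have bound: "norm (grad_in H \<Omega> ((1 - t) *\<^sub>R p + t *\<^sub>R y)) \<le> 2 * K / r" if t: "0 < t" "t \<le> 1" for t
  proof -
    define xt where "xt = (1 - t) *\<^sub>R p + t *\<^sub>R y"
    have "xt = p - t *\<^sub>R (p - y)" unfolding xt_def by (simp add: algebra_simps)
    then have xtRI: "xt \<in> RI"
      using rel_interior_closure_convex_shrink[OF cvx yRI closure_subset[THEN subsetD, OF pC] t(1,2)] by simp
    have xtC: "xt \<in> C" using RI_C[OF xtRI] .
    define G where "G = grad_in H \<Omega> xt"
    have hG: "has_grad_in H \<Omega> G xt" unfolding G_def using grad_RI[OF xtRI] .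
    have GV: "G \<in> V" using grad_V[OF hG] .
    show ?thesis
    proof (cases "G = 0")
      case True
      have "phi \<theta> y \<le> phi \<theta> p" using pmax yC by blast
      then have "K \<ge> 1" unfolding K_def phi_def by (simp add: inner_diff_right)
      then show ?thesis using True r unfolding xt_def[symmetric] G_def[symmetric] by simp
    next
      case False
      define u where "u = (r / 2 / norm G) *\<^sub>R G"
      have uV: "u \<in> V" unfolding u_def using subspace_scale[OF subV GV] .
      have nu: "norm u = r / 2" unfolding u_def using False r by simp
      have Gu: "G \<bullet> u = r / 2 * norm G" unfolding u_def using False
        by (simp add: power2_norm_eq_inner[symmetric] power2_eq_square)
      have yuH: "y + 1 *\<^sub>R u \<in> H" using H_V[OF CH[OF yC] uV] .
      have dyu: "dist (y + u) y = r / 2" using nu by (simp add: dist_norm)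
      have yuC: "y + u \<in> C" using r1(2) yuH dyu r unfolding r_def by (auto simp: dist_commute)
      have "dist (\<omega> (y + u)) (\<omega> y) < 1" using r2(2) yuH dyu r unfolding r_def by auto
      then have wyu: "\<omega> (y + u) \<le> \<omega> y + 1" by (simp add: dist_real_def)
      define w where "w = (1 - t) *\<^sub>R p + t *\<^sub>R (y + u)"
      have wC: "w \<in> C" unfolding w_def using conv(1)[OF pC yuC] t by simp
      have ww: "\<omega> w \<le> (1 - t) * \<omega> p + t * (\<omega> y + 1)"
        unfolding w_def using conv(2)[OF pC yuC, of t] t wyu
        by (smt (verit) mult_left_mono)
      have wx: "w - xt = t *\<^sub>R u" unfolding w_def xt_def by (simp add: algebra_simps)
      have sg: "\<omega> xt + G \<bullet> (w - xt) \<le> \<omega> w" using subgrad[OF xtC hG wC] .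
      have "phi \<theta> xt \<le> phi \<theta> p" using pmax xtC by blast
      then have opt: "\<omega> xt \<ge> \<omega> p + t * (\<theta> \<bullet> (y - p))"
        unfolding phi_def xt_def by (simp add: algebra_simps inner_add_right inner_diff_right)
      have sg': "\<omega> xt + t * (r / 2 * norm G) \<le> \<omega> w" using sg unfolding wx by (simp add: Gu)
      have ww': "\<omega> w \<le> \<omega> p - t * \<omega> p + t * \<omega> y + t" using ww by (simp add: algebra_simps)
      have opt': "\<omega> xt \<ge> \<omega> p + t * (\<theta> \<bullet> y) - t * (\<theta> \<bullet> p)" using opt by (simp add: algebra_simps inner_diff_right)
      have tK: "t * K = t * \<omega> y + t - t * \<omega> p - t * (\<theta> \<bullet> y) + t * (\<theta> \<bullet> p)"
        unfolding K_def by (simp add: algebra_simps inner_diff_right)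
      have "t * (r / 2 * norm G) \<le> t * K"
        unfolding tK using sg' ww' opt' by linarith
      then have "r / 2 * norm G \<le> K" using t by simp
      then show ?thesis using r unfolding xt_def[symmetric] G_def[symmetric] by (simp add: field_simps)
    qed
  qed
  define s where "s k = (1 - inverse (real (Suc k))) *\<^sub>R p + inverse (real (Suc k)) *\<^sub>R y" for k
  have sRI: "s k \<in> RI" for k
  proof -
    have "s k = p - inverse (real (Suc k)) *\<^sub>R (p - y)" unfolding s_def by (simp add: algebra_simps)
    moreover have "p - inverse (real (Suc k)) *\<^sub>R (p - y) \<in> RI"
      by (rule rel_interior_closure_convex_shrink[OF cvx yRI closure_subset[THEN subsetD, OF pC]])
         (auto simp: field_simps)
    ultimately show ?thesis by simp
  qed
  have "(\<lambda>k. p - inverse (real (Suc k)) *\<^sub>R (p - y)) \<longlonglongrightarrow> p - 0 *\<^sub>R (p - y)"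
    by (intro tendsto_intros LIMSEQ_inverse_real_of_nat)
  moreover have "(\<lambda>k. p - inverse (real (Suc k)) *\<^sub>R (p - y)) = s"
    unfolding s_def by (rule ext) (simp add: algebra_simps)
  ultimately have slim: "s \<longlonglongrightarrow> p" by simp
  have "filterlim (\<lambda>k. norm (grad_in H \<Omega> (s k))) at_top sequentially"
    by (rule blow[OF sRI slim pC pn])
  then have "eventually (\<lambda>k. 2 * K / r + 1 \<le> norm (grad_in H \<Omega> (s k))) sequentially"
    unfolding filterlim_at_top by blast
  then obtain k where "2 * K / r + 1 \<le> norm (grad_in H \<Omega> (s k))"
    unfolding eventually_sequentially by blast
  moreover have "norm (grad_in H \<Omega> (s k)) \<le> 2 * K / r"
    unfolding s_def by (rule bound) (auto simp: field_simps)
  ultimately show False by simp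
qed

lemma max_unique:
  assumes "p \<in> C" "\<forall>x\<in>C. phi \<theta> x \<le> phi \<theta> p" "q \<in> C" "\<forall>x\<in>C. phi \<theta> x \<le> phi \<theta> q"
  shows "p = q"
proof (rule ccontr)
  assume ne: "p \<noteq> q"
  have pR: "p \<in> RI" and qR: "q \<in> RI" using max_RI assms by blast+
  have eq: "phi \<theta> p = phi \<theta> q" using assms by (meson order_antisym)
  define m where "m = (1/2::real) *\<^sub>R p + (1 - 1/2) *\<^sub>R q"
  have mC: "m \<in> C" unfolding m_def using convexD[OF cvx assms(1,3), of "1/2" "1 - 1/2"] by simp
  have "\<omega> m < 1/2 * \<omega> p + (1 - 1/2) * \<omega> q" unfolding m_def by (rule strict[OF pR qR ne]) auto
  then have "phi \<theta> m > phi \<theta> p" using eq unfolding phi_def m_def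
    by (simp add: inner_add_right algebra_simps)
  then show False using assms(2) mC by fastforce
qed

definition "P \<theta> = (SOME p. p \<in> C \<and> (\<forall>x\<in>C. phi \<theta> x \<le> phi \<theta> p))"

lemma P_ex: "\<exists>p. p \<in> C \<and> (\<forall>x\<in>C. phi \<theta> x \<le> phi \<theta> p)"
  using max_on[OF cpt C_ne order_refl] by blast

lemma P: "P \<theta> \<in> C" "\<And>x. x \<in> C \<Longrightarrow> phi \<theta> x \<le> phi \<theta> (P \<theta>)"
  using someI_ex[OF P_ex[of \<theta>]] unfolding P_def[symmetric] by auto

lemma P_RI: "P \<theta> \<in> RI" using max_RI P by blast

lemma P_eq: "p \<in> C \<Longrightarrow> (\<forall>x\<in>C. phi \<theta> x \<le> phi \<theta> p) \<Longrightarrow> P \<theta> = p"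
  using max_unique P by blast

lemma conj_eq: "fenchel_conj \<Omega> \<theta> = ereal (phi \<theta> (P \<theta>))"
  unfolding fenchel_conj_def
proof (rule antisym)
  show "(SUP x. ereal (\<theta> \<bullet> x) - \<Omega> x) \<le> ereal (phi \<theta> (P \<theta>))"
  proof (rule SUP_least)
    fix x show "ereal (\<theta> \<bullet> x) - \<Omega> x \<le> ereal (phi \<theta> (P \<theta>))"
    proof (cases "x \<in> C")
      case True then show ?thesis using P(2)[OF True] Om_C[OF True] unfolding phi_def by simp
    qed (simp add: Om_nC)
  qed
  show "ereal (phi \<theta> (P \<theta>)) \<le> (SUP x. ereal (\<theta> \<bullet> x) - \<Omega> x)"
    by (rule SUP_upper2[of "P \<theta>"]) (auto simp: Om_C[OF P(1)] phi_def)
qed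


lemma C_bound: "\<exists>R>0. \<forall>x\<in>C. norm x \<le> R"
  using compact_imp_bounded[OF cpt] unfolding bounded_pos .

lemma phi_diff: "\<bar>phi \<theta>' x - phi \<theta> x\<bar> \<le> norm (\<theta>' - \<theta>) * norm x"
proof -
  have "phi \<theta>' x - phi \<theta> x = (\<theta>' - \<theta>) \<bullet> x" unfolding phi_def by (simp add: inner_diff_left)
  then show ?thesis using Cauchy_Schwarz_ineq2[of "\<theta>' - \<theta>" x] by simp
qed

lemma P_cont:
  assumes "\<epsilon> > 0"
  shows "\<exists>\<delta>>0. \<forall>\<theta>'. dist \<theta>' \<theta> < \<delta> \<longrightarrow> dist (P \<theta>') (P \<theta>) < \<epsilon>"
proof -
  define p where "p = P \<theta>"
  define K where "K = C - ball p \<epsilon>"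
  have Kc: "compact K" unfolding K_def by (intro compact_diff cpt open_ball)
  show ?thesis
  proof (cases "K = {}")
    case True
    have "dist (P \<theta>') (P \<theta>) < \<epsilon>" for \<theta>'
      using P(1)[of \<theta>'] True unfolding K_def p_def by (auto simp: dist_commute)
    then show ?thesis by (intro exI[of _ 1]) auto
  next
    case False
    obtain q where q: "q \<in> K" "\<forall>x\<in>K. phi \<theta> x \<le> phi \<theta> q"
      using max_on[OF Kc False] unfolding K_def by blast
    have qC: "q \<in> C" and qd: "dist p q \<ge> \<epsilon>" using q(1) unfolding K_def by auto
    have le: "phi \<theta> q \<le> phi \<theta> p" unfolding p_def using P(2)[OF qC] .
    have lt: "phi \<theta> q < phi \<theta> p"
    proof (rule ccontr)
      assume "\<not> ?thesis"
      then have "phi \<theta> q = phi \<theta> p" using le by simp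
      then have "\<forall>x\<in>C. phi \<theta> x \<le> phi \<theta> q" using P(2) unfolding p_def by simp
      then have "P \<theta> = q" using P_eq[OF qC] by blast
      then show False using qd assms unfolding p_def by simp
    qed
    define d0 where "d0 = phi \<theta> p - phi \<theta> q"
    have d0: "d0 > 0" unfolding d0_def using lt by simp
    obtain R where R: "R > 0" "\<forall>x\<in>C. norm x \<le> R" using C_bound by blast
    define \<delta> where "\<delta> = d0 / (2 * R)"
    have \<delta>: "\<delta> > 0" unfolding \<delta>_def using d0 R by simp
    have "dist (P \<theta>') (P \<theta>) < \<epsilon>" if th: "dist \<theta>' \<theta> < \<delta>" for \<theta>'
    proof (rule ccontr)
      assume "\<not> ?thesis"
      then have PK: "P \<theta>' \<in> K" using P(1)[of \<theta>'] unfolding K_def p_def by (auto simp: dist_commute)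
      have close: "\<bar>phi \<theta>' x - phi \<theta> x\<bar> < d0 / 2" if "x \<in> C" for x
      proof -
        have "\<bar>phi \<theta>' x - phi \<theta> x\<bar> \<le> norm (\<theta>' - \<theta>) * norm x" by (rule phi_diff)
        also have "\<dots> \<le> norm (\<theta>' - \<theta>) * R" using R that by (intro mult_left_mono) auto
        also have "\<dots> < \<delta> * R" using th R by (intro mult_strict_right_mono) (auto simp: dist_norm)
        also have "\<dots> = d0 / 2" unfolding \<delta>_def using R by simp
        finally show ?thesis .
      qed
      have a: "phi \<theta>' (P \<theta>') < phi \<theta> (P \<theta>') + d0 / 2" using close[OF P(1)[of \<theta>']] by linarith
      have b: "phi \<theta> (P \<theta>') \<le> phi \<theta> q" using q(2) PK by blast
      have c: "phi \<theta> p - d0 / 2 < phi \<theta>' p" using close[OF P(1)[of \<theta>]] unfolding p_def by linarith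
      have "phi \<theta>' p \<le> phi \<theta>' (P \<theta>')" using P(2)[of p \<theta>'] P(1) unfolding p_def by blast
      then show False using a b c unfolding d0_def by (simp add: field_simps)
    qed
    then show ?thesis using \<delta> by blast
  qed
qed

definition "m \<theta> = phi \<theta> (P \<theta>)"

lemma P_tendsto: "(P \<longlongrightarrow> P \<theta>) (at \<theta>)"
  unfolding tendsto_iff eventually_at
proof (intro allI impI)
  fix e :: real assume "e > 0"
  then obtain d where "d > 0" "\<forall>\<theta>'. dist \<theta>' \<theta> < d \<longrightarrow> dist (P \<theta>') (P \<theta>) < e" using P_cont by blast
  then show "\<exists>d>0. \<forall>x\<in>UNIV. x \<noteq> \<theta> \<and> dist x \<theta> < d \<longrightarrow> dist (P x) (P \<theta>) < e" by blast
qed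

lemma conj_deriv: "has_grad_in UNIV (fenchel_conj \<Omega>) (P \<theta>) \<theta>"
  unfolding has_grad_in_def
proof (intro conjI)
  show "P \<theta> \<in> dir UNIV" unfolding dir_def by (rule CollectI, rule exI[of _ "P \<theta>"], rule exI[of _ 0]) simp
  show "fenchel_conj \<Omega> \<theta> \<noteq> \<infinity>" "fenchel_conj \<Omega> \<theta> \<noteq> - \<infinity>" unfolding conj_eq by simp_all
  have fe: "(\<lambda>y. real_of_ereal (fenchel_conj \<Omega> y)) = m" unfolding conj_eq m_def by simp
  have E0: "0 \<le> m y - (m \<theta> + P \<theta> \<bullet> (y - \<theta>))" for y
    using P(2)[OF P(1)[of \<theta>], of y] unfolding m_def phi_def by (simp add: inner_diff_left inner_commute)
  have E1: "m y - (m \<theta> + P \<theta> \<bullet> (y - \<theta>)) \<le> norm (y - \<theta>) * norm (P y - P \<theta>)" for y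
  proof -
    have "phi \<theta> (P y) \<le> m \<theta>" unfolding m_def using P(2)[OF P(1)] .
    then have "m y - (m \<theta> + P \<theta> \<bullet> (y - \<theta>)) \<le> (y - \<theta>) \<bullet> (P y - P \<theta>)"
      unfolding m_def phi_def by (simp add: inner_diff_left inner_diff_right inner_commute)
    also have "\<dots> \<le> norm (y - \<theta>) * norm (P y - P \<theta>)" by (rule norm_cauchy_schwarz)
    finally show ?thesis .
  qed
  have "((\<lambda>y. (1 / norm (y - \<theta>)) *\<^sub>R (m y - (m \<theta> + P \<theta> \<bullet> (y - \<theta>)))) \<longlongrightarrow> 0) (at \<theta>)"
  proof (rule Lim_null_comparison)
    show "eventually (\<lambda>y. norm ((1 / norm (y - \<theta>)) *\<^sub>R (m y - (m \<theta> + P \<theta> \<bullet> (y - \<theta>)))) \<le> norm (P y - P \<theta>)) (at \<theta>)"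
      unfolding eventually_at
    proof (intro exI[of _ 1] conjI ballI impI)
      fix y assume "y \<in> UNIV" "y \<noteq> \<theta> \<and> dist y \<theta> < 1"
      then have n: "norm (y - \<theta>) > 0" by simp
      show "norm ((1 / norm (y - \<theta>)) *\<^sub>R (m y - (m \<theta> + P \<theta> \<bullet> (y - \<theta>)))) \<le> norm (P y - P \<theta>)"
        using E0[of y] E1[of y] n by (simp add: divide_simps mult.commute)
    qed simp
    show "((\<lambda>y. norm (P y - P \<theta>)) \<longlongrightarrow> 0) (at \<theta>)"
      using tendsto_norm_zero[OF LIM_zero[OF P_tendsto]] .
  qed
  then show "((\<lambda>y. real_of_ereal (fenchel_conj \<Omega> y)) has_derivative (\<bullet>) (P \<theta>)) (at \<theta> within UNIV)"
    unfolding fe has_derivative_within by (simp add: bounded_linear_inner_right)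
qed


definition "Psi x = \<Omega> (pr x) + ereal ((1/2) * (Qr x \<bullet> Qr x))"
definition "psi x = \<omega> (pr x) + (1/2) * (Qr x \<bullet> Qr x)"
definition "U = {x. pr x \<in> RI}"

lemma pr_Qr: "x = pr x + Qr x" unfolding Qr_def by simp

lemma Psi_fin: "pr x \<in> C \<Longrightarrow> Psi x = ereal (psi x)"
  unfolding Psi_def psi_def using Om_C by simp

lemma Psi_inf: "pr x \<notin> C \<Longrightarrow> Psi x = \<infinity>"
  unfolding Psi_def using Om_nC by simp

lemma Psi_nm: "Psi x \<noteq> -\<infinity>"
  by (cases "pr x \<in> C") (simp_all add: Psi_fin Psi_inf)

lemma Psi_Om: "\<Omega> x = Psi x + eindicator C x"
proof (cases "x \<in> C")
  case True
  then have "pr x = x" "Qr x = 0" using pr_id Qr_H CH by auto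
  then show ?thesis unfolding Psi_def eindicator_def using True by simp
next
  case False
  then show ?thesis unfolding eindicator_def using Om_nC Psi_nm by simp
qed

lemma edom_Psi: "edom Psi = {x. pr x \<in> C}"
proof -
  have "Psi x < \<infinity> \<longleftrightarrow> pr x \<in> C" for x
    by (cases "pr x \<in> C") (simp_all add: Psi_fin Psi_inf)
  then show ?thesis unfolding edom_def by blast
qed

lemma cont_at_pr: "continuous (at x) pr"
  using pr_deriv has_derivative_continuous by blast

lemma U_open: "open U"
proof -
  obtain T where T: "open T" "RI = H \<inter> T" using openin_rel_interior[of C] unfolding openin_open by blast
  have "U = pr -` T" unfolding U_def T(2) using pr_H by auto
  then show ?thesis using continuous_open_vimage[OF T(1) cont_at_pr] by simp
qed

lemma U_sub: "U \<subseteq> edom Psi" unfolding U_def edom_Psi using RI_C by auto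

lemma int_Psi: "interior (edom Psi) = U"
proof
  show "U \<subseteq> interior (edom Psi)" using U_open U_sub interior_maximal by blast
  show "interior (edom Psi) \<subseteq> U"
  proof
    fix x assume "x \<in> interior (edom Psi)"
    then obtain e where e: "e > 0" "ball x e \<subseteq> edom Psi" using mem_interior by blast
    have pxC: "pr x \<in> C" using e centre_in_ball[of x e] unfolding edom_Psi by blast
    have "ball (pr x) e \<inter> H \<subseteq> C"
    proof
      fix w assume w: "w \<in> ball (pr x) e \<inter> H"
      have v: "w - pr x \<in> V" using HH_V w pr_H by blast
      have "x + (w - pr x) \<in> ball x e" using w by (simp add: dist_norm norm_minus_commute)
      then have "pr (x + (w - pr x)) \<in> C" using e unfolding edom_Psi by blast
      then show "w \<in> C" using pr_add[OF v, of x] by simp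
    qed
    then have "pr x \<in> RI" unfolding rel_interior_ball using pxC e by blast
    then show "x \<in> U" unfolding U_def by simp
  qed
qed

lemma RI_U: "RI \<subseteq> U" unfolding U_def using pr_id CH RI_C by auto

lemma Gdef: "x \<in> U \<Longrightarrow> has_grad_in UNIV Psi (grad_in H \<Omega> (pr x) + Qr x) x"
proof -
  assume xU: "x \<in> U"
  define g where "g = grad_in H \<Omega> (pr x)"
  have pRI: "pr x \<in> RI" using xU unfolding U_def by simp
  have hg: "has_grad_in H \<Omega> g (pr x)" unfolding g_def using grad_RI[OF pRI] .
  have gV: "g \<in> V" using grad_V[OF hg] .
  have d: "((\<lambda>y. real_of_ereal (\<Omega> y)) has_derivative (\<lambda>h. g \<bullet> h)) (at (pr x) within H)"
    using hg unfolding has_grad_in_def by blast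
  have d2: "((\<lambda>y. real_of_ereal (\<Omega> y)) has_derivative (\<lambda>h. g \<bullet> h)) (at (pr x) within range pr)"
    using has_derivative_subset[OF d] pr_H by blast
  have d3: "((\<lambda>y. real_of_ereal (\<Omega> (pr y))) has_derivative (\<lambda>h. g \<bullet> Pv h)) (at x)"
    using diff_chain_within[OF pr_deriv[of x UNIV] d2] by (simp add: comp_def)
  have d4: "((\<lambda>y. \<omega> (pr y)) has_derivative (\<lambda>h. g \<bullet> h)) (at x)"
    unfolding \<omega>_def by (rule has_derivative_eq_rhs[OF d3]) (simp add: Pv_inner[OF gV])
  have dQ: "(Qr has_derivative (\<lambda>h. h - Pv h)) (at x)"
  proof -
    have "((\<lambda>y. y - pr y) has_derivative (\<lambda>h. h - Pv h)) (at x)"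
      by (rule has_derivative_diff[OF has_derivative_ident pr_deriv])
    then show ?thesis unfolding Qr_def[abs_def] .
  qed
  have dqq: "((\<lambda>y. Qr y \<bullet> Qr y) has_derivative (\<lambda>h. Qr x \<bullet> (h - Pv h) + (h - Pv h) \<bullet> Qr x)) (at x)"
    by (rule has_derivative_inner[OF dQ dQ])
  have dq: "((\<lambda>y. (1/2) * (Qr y \<bullet> Qr y)) has_derivative (\<lambda>h. (1/2) * (Qr x \<bullet> (h - Pv h) + (h - Pv h) \<bullet> Qr x))) (at x)"
    by (rule has_derivative_mult_right[OF dqq])
  have eq: "(1/2) * (Qr x \<bullet> (h - Pv h) + (h - Pv h) \<bullet> Qr x) = Qr x \<bullet> h" for h
  proof -
    have "Qr x \<bullet> Pv h = 0" using Qr_orth[OF Pv(1)] .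
    then show ?thesis by (simp add: inner_diff_left inner_diff_right inner_commute)
  qed
  have dpsi: "(psi has_derivative (\<lambda>h. (g + Qr x) \<bullet> h)) (at x)"
    unfolding psi_def[abs_def]
    by (rule has_derivative_eq_rhs[OF has_derivative_add[OF d4 dq]]) (simp only: eq inner_add_left)
  have "((\<lambda>y. real_of_ereal (Psi y)) has_derivative (\<lambda>h. (g + Qr x) \<bullet> h)) (at x)"
  proof (rule has_derivative_transform_within_open[OF dpsi U_open xU])
    fix y assume "y \<in> U"
    then have "pr y \<in> C" unfolding U_def using RI_C by blast
    then show "psi y = real_of_ereal (Psi y)" using Psi_fin by simp
  qed
  moreover have "g + Qr x \<in> dir UNIV"
    unfolding dir_def by (rule CollectI, rule exI[of _ "g + Qr x"], rule exI[of _ 0]) simp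
  moreover have "Psi x \<noteq> \<infinity>" "Psi x \<noteq> -\<infinity>" using Psi_fin RI_C pRI by auto
  ultimately show ?thesis unfolding has_grad_in_def g_def by simp
qed

lemma grad_UNIV_unique:
  assumes "has_grad_in UNIV f a x" "has_grad_in UNIV f b x"
  shows "a = b"
proof -
  have "(\<lambda>h. a \<bullet> h) = (\<lambda>h. b \<bullet> h)"
    using has_derivative_unique assms unfolding has_grad_in_def by blast
  then have "a \<bullet> (a - b) = b \<bullet> (a - b)" by metis
  then have "(a - b) \<bullet> (a - b) = 0" by (simp add: inner_diff_left)
  then show ?thesis by simp
qed

lemma grad_Psi: "x \<in> U \<Longrightarrow> grad_in UNIV Psi x = grad_in H \<Omega> (pr x) + Qr x"
proof -
  assume xU: "x \<in> U"
  have "has_grad_in UNIV Psi (grad_in UNIV Psi x) x"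
    unfolding grad_in_def using Gdef[OF xU] by (rule someI)
  then show ?thesis using grad_UNIV_unique Gdef[OF xU] by blast
qed


lemma sq_comb:
  fixes a b :: 'a
  shows "(u *\<^sub>R a + (1-u) *\<^sub>R b) \<bullet> (u *\<^sub>R a + (1-u) *\<^sub>R b)
     = u * (a \<bullet> a) + (1-u) * (b \<bullet> b) - u * (1-u) * ((a - b) \<bullet> (a - b))"
  by (simp add: inner_add_left inner_add_right inner_diff_left inner_diff_right inner_commute algebra_simps)

lemma U_conv: "x \<in> U \<Longrightarrow> y \<in> U \<Longrightarrow> 0 \<le> u \<Longrightarrow> u \<le> 1 \<Longrightarrow> u *\<^sub>R x + (1 - u) *\<^sub>R y \<in> U"
  using convexD[OF convex_rel_interior[OF cvx], of "pr x" "pr y" u "1 - u"] by (simp add: U_def pr_comb)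

lemma U_C: "x \<in> U \<Longrightarrow> pr x \<in> C" unfolding U_def using RI_C by blast

lemma psi_strict:
  assumes xU: "x \<in> U" and yU: "y \<in> U" and ne: "x \<noteq> y" and u: "0 < u" "u < 1"
  shows "psi (u *\<^sub>R x + (1 - u) *\<^sub>R y) < u * psi x + (1 - u) * psi y"
proof -
  define z where "z = u *\<^sub>R x + (1 - u) *\<^sub>R y"
  define aa where "aa = Qr x \<bullet> Qr x"
  define bb where "bb = Qr y \<bullet> Qr y"
  define dd where "dd = (Qr x - Qr y) \<bullet> (Qr x - Qr y)"
  have qz: "Qr z \<bullet> Qr z = u * aa + (1-u) * bb - u * (1-u) * dd"
    unfolding z_def Qr_comb aa_def bb_def dd_def by (rule sq_comb)
  have pz: "pr z = u *\<^sub>R pr x + (1 - u) *\<^sub>R pr y" unfolding z_def by (rule pr_comb)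
  have dd0: "dd \<ge> 0" unfolding dd_def by simp
  have uu: "u * (1 - u) > 0" using u by simp
  have rhs: "u * psi x + (1 - u) * psi y = u * \<omega> (pr x) + (1 - u) * \<omega> (pr y) + (1/2) * (u * aa + (1-u) * bb)"
    unfolding psi_def aa_def bb_def by (simp add: field_simps)
  have lhs: "psi z = \<omega> (pr z) + (1/2) * (u * aa + (1-u) * bb) - (1/2) * (u * (1-u) * dd)"
    unfolding psi_def qz by (simp add: field_simps)
  show ?thesis
  proof (cases "pr x = pr y")
    case True
    have "Qr x \<noteq> Qr y" using ne True pr_Qr[of x] pr_Qr[of y] by metis
    then have "dd > 0" unfolding dd_def by simp
    then have pos: "(1/2) * (u * (1-u) * dd) > 0" using uu by simp
    have pzx: "pr z = pr x" unfolding pz True by (simp add: scaleR_left_distrib[symmetric])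
    have "psi z < \<omega> (pr x) + (1/2) * (u * aa + (1-u) * bb)" unfolding lhs pzx using pos by linarith
    also have "\<dots> = u * psi x + (1 - u) * psi y" unfolding rhs True by (simp add: algebra_simps)
    finally show ?thesis unfolding z_def .
  next
    case False
    have "\<omega> (pr z) < u * \<omega> (pr x) + (1 - u) * \<omega> (pr y)"
      unfolding pz by (rule strict) (use xU yU False u in \<open>auto simp: U_def\<close>)
    moreover have "(1/2) * (u * (1-u) * dd) \<ge> 0" using uu dd0 by simp
    ultimately have "psi z < u * \<omega> (pr x) + (1 - u) * \<omega> (pr y) + (1/2) * (u * aa + (1-u) * bb)"
      unfolding lhs by linarith
    then show ?thesis unfolding rhs z_def .
  qed
qed

lemma int_in_UNIV: "int_in UNIV S = interior S"
  unfolding int_in_def interior_def by auto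

lemma closed_edom_Psi: "closed (edom Psi)"
proof -
  have "edom Psi = pr -` C" unfolding edom_Psi by auto
  then show ?thesis using continuous_closed_vimage[OF compact_imp_closed[OF cpt] cont_at_pr] by simp
qed

lemma leg_Psi: "legendre Psi"
  unfolding legendre_in_def Let_def Int_UNIV_right int_in_UNIV int_Psi closure_closed[OF closed_edom_Psi]
proof (intro conjI ballI allI impI)
  show "U \<noteq> {}" using RI_U RI_ne by blast
  fix x assume xU: "x \<in> U"
  then show "\<exists>g. has_grad_in UNIV Psi g x" using Gdef by blast
  fix y and u :: real assume yU: "y \<in> U" and ne: "x \<noteq> y" and u: "0 < u \<and> u < 1"
  have zU: "u *\<^sub>R x + (1 - u) *\<^sub>R y \<in> U" using U_conv xU yU u by simp
  have "psi (u *\<^sub>R x + (1 - u) *\<^sub>R y) < u * psi x + (1 - u) * psi y"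
    using psi_strict xU yU ne u by blast
  then show "Psi (u *\<^sub>R x + (1 - u) *\<^sub>R y) < ereal u * Psi x + ereal (1 - u) * Psi y"
    using Psi_fin[OF U_C[OF xU]] Psi_fin[OF U_C[OF yU]] Psi_fin[OF U_C[OF zU]] by simp
next
  fix s and x :: 'a
  assume sU: "\<forall>k. s k \<in> U" and sx: "s \<longlonglongrightarrow> x" and x: "x \<in> edom Psi - U"
  have ps: "(\<lambda>k. pr (s k)) \<longlonglongrightarrow> pr x" using isCont_tendsto_compose[OF cont_at_pr sx] .
  have L: "filterlim (\<lambda>k. norm (grad_in H \<Omega> (pr (s k)))) at_top sequentially"
    by (rule blow[OF _ ps]) (use sU x in \<open>auto simp: U_def edom_Psi\<close>)
  have B: "\<forall>k. norm (grad_in H \<Omega> (pr (s k))) \<le> norm (grad_in UNIV Psi (s k))"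
  proof
    fix k
    have "pr (s k) \<in> RI" using sU unfolding U_def by auto
    then have "grad_in H \<Omega> (pr (s k)) \<in> V" using grad_V[OF grad_RI] by blast
    then show "norm (grad_in H \<Omega> (pr (s k))) \<le> norm (grad_in UNIV Psi (s k))"
      unfolding grad_Psi[OF sU[rule_format]] by (rule norm_orth)
  qed
  show "filterlim (\<lambda>k. norm (grad_in UNIV Psi (s k))) at_top sequentially"
    by (rule filterlim_at_top_mono[OF L always_eventually[OF B]])
qed

lemma conjPsi_fin: "edom (fenchel_conj Psi) = UNIV"
proof -
  have bnd: "fenchel_conj Psi \<theta> \<le> ereal (m \<theta> + (1/2) * (\<theta> \<bullet> \<theta>))" for \<theta>
    unfolding fenchel_conj_def
  proof (rule SUP_least)
    fix x
    show "ereal (\<theta> \<bullet> x) - Psi x \<le> ereal (m \<theta> + (1/2) * (\<theta> \<bullet> \<theta>))"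
    proof (cases "pr x \<in> C")
      case True
      have a: "phi \<theta> (pr x) \<le> m \<theta>" unfolding m_def using P(2)[OF True] .
      have "0 \<le> (\<theta> - Qr x) \<bullet> (\<theta> - Qr x)" by simp
      then have b: "\<theta> \<bullet> Qr x - (1/2) * (Qr x \<bullet> Qr x) \<le> (1/2) * (\<theta> \<bullet> \<theta>)"
        by (simp add: inner_diff_left inner_diff_right inner_commute algebra_simps)
      have c: "\<theta> \<bullet> x = \<theta> \<bullet> pr x + \<theta> \<bullet> Qr x" using pr_Qr[of x] by (metis inner_add_right)
      have "\<theta> \<bullet> x - psi x \<le> m \<theta> + (1/2) * (\<theta> \<bullet> \<theta>)"
        using a b unfolding psi_def c phi_def by linarith
      then show ?thesis using Psi_fin[OF True] by simp
    qed (simp add: Psi_inf)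
  qed
  have "fenchel_conj Psi \<theta> < \<infinity>" for \<theta>
    using le_less_trans[OF bnd[of \<theta>], of \<infinity>] by simp
  then show ?thesis unfolding edom_def by auto
qed

lemma final_grad:
  "\<exists>z. (\<forall>v \<in> dir (affine hull C). z \<bullet> v = 0) \<and>
     (\<exists>p. has_grad_in UNIV (fenchel_conj \<Omega>) p \<theta> \<and> has_grad_in UNIV Psi (\<theta> + z) p)"
proof -
  define p where "p = P \<theta>"
  have pRI: "p \<in> RI" unfolding p_def by (rule P_RI)
  have pC: "p \<in> C" using RI_C[OF pRI] .
  define g where "g = grad_in H \<Omega> p"
  have hg: "has_grad_in H \<Omega> g p" unfolding g_def using grad_RI[OF pRI] .
  have pU: "p \<in> U" using RI_U pRI by blast
  have G: "has_grad_in UNIV Psi g p"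
    using Gdef[OF pU] unfolding pr_id[OF CH[OF pC]] Qr_H[OF CH[OF pC]] g_def by simp
  have orth: "(g - \<theta>) \<bullet> v = 0" if vV: "v \<in> V" for v
  proof -
    obtain e where e: "e > 0" "ball p e \<inter> H \<subseteq> C" using pRI unfolding rel_interior_ball by blast
    define f where "f t = phi \<theta> (p + t *\<^sub>R v)" for t
    have f_eq: "f = (\<lambda>t. (\<theta> \<bullet> p + t * (\<theta> \<bullet> v)) - \<omega> (p + t *\<^sub>R v))"
      unfolding f_def phi_def by (auto simp: fun_eq_iff inner_add_right)
    have d1: "((\<lambda>t. \<theta> \<bullet> p + t * (\<theta> \<bullet> v)) has_real_derivative (\<theta> \<bullet> v)) (at 0)"
      by (auto intro!: derivative_eq_intros)
    have "(f has_real_derivative (\<theta> \<bullet> v - g \<bullet> v)) (at 0)"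
      unfolding f_eq by (rule DERIV_diff[OF d1 line_deriv[OF hg CH[OF pC] vV]])
    moreover have "0 < e / (norm v + 1)" using e by (simp add: add_nonneg_pos)
    moreover have "\<forall>t. \<bar>0 - t\<bar> < e / (norm v + 1) \<longrightarrow> f t \<le> f 0"
    proof (intro allI impI)
      fix t :: real assume t: "\<bar>0 - t\<bar> < e / (norm v + 1)"
      have "norm (t *\<^sub>R v) = \<bar>t\<bar> * norm v" by simp
      also have "\<dots> \<le> \<bar>t\<bar> * (norm v + 1)" by (simp add: mult_left_mono)
      also have "\<dots> < e"
      proof -
        have n1: "0 < norm v + 1" by (rule add_nonneg_pos) simp_all
        have "\<bar>t\<bar> < e / (norm v + 1)" using t by simp
        then show ?thesis using n1 by (simp add: pos_less_divide_eq)
      qed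
      finally have "p + t *\<^sub>R v \<in> ball p e" by (simp add: dist_norm)
      moreover have "p + t *\<^sub>R v \<in> H" using H_V[OF CH[OF pC] vV] .
      ultimately have "p + t *\<^sub>R v \<in> C" using e by blast
      then show "f t \<le> f 0" unfolding f_def p_def using P(2) by simp
    qed
    ultimately have "\<theta> \<bullet> v - g \<bullet> v = 0" by (rule DERIV_local_max)
    then show ?thesis by (simp add: inner_diff_left)
  qed
  show ?thesis
  proof (intro exI conjI)
    show "\<forall>v\<in>dir (affine hull C). (g - \<theta>) \<bullet> v = 0" using orth unfolding V_def by blast
    show "has_grad_in UNIV (fenchel_conj \<Omega>) p \<theta>" unfolding p_def by (rule conj_deriv)
    show "has_grad_in UNIV Psi (\<theta> + (g - \<theta>)) p" using G by simp
  qed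
qed

lemma main:
  "\<exists>\<Psi> :: 'a \<Rightarrow> ereal.
           (\<forall>x. \<Psi> x \<noteq> -\<infinity>) \<and> legendre \<Psi> \<and>
           C \<subseteq> closure (interior (edom \<Psi>)) \<and>
           interior (edom \<Psi>) \<inter> C \<noteq> {} \<and>
           (\<forall>x. \<Omega> x = \<Psi> x + eindicator C x) \<and>
           edom (fenchel_conj \<Psi>) = UNIV \<and>
           (\<forall>\<theta>. \<exists>z. (\<forall>v \<in> dir (affine hull C). z \<bullet> v = 0) \<and>
                (\<exists>p. has_grad_in UNIV (fenchel_conj \<Omega>) p \<theta> \<and>
                     has_grad_in UNIV \<Psi> (\<theta> + z) p))"
proof (intro exI[of _ Psi] conjI allI)
  show "\<And>x. Psi x \<noteq> - \<infinity>" by (rule Psi_nm)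
  show "legendre Psi" by (rule leg_Psi)
  have "C \<subseteq> closure C" by (rule closure_subset)
  also have "\<dots> = closure RI" using convex_closure_rel_interior[OF cvx] by simp
  also have "\<dots> \<subseteq> closure U" by (rule closure_mono[OF RI_U])
  finally show "C \<subseteq> closure (interior (edom Psi))" unfolding int_Psi .
  show "interior (edom Psi) \<inter> C \<noteq> {}" unfolding int_Psi using RI_U RI_ne RI_C by blast
  show "\<And>x. \<Omega> x = Psi x + eindicator C x" by (rule Psi_Om)
  show "edom (fenchel_conj Psi) = UNIV" by (rule conjPsi_fin)
  show "\<And>\<theta>. \<exists>z. (\<forall>v\<in>dir (affine hull C). z \<bullet> v = 0) \<and>
         (\<exists>p. has_grad_in UNIV (fenchel_conj \<Omega>) p \<theta> \<and> has_grad_in UNIV Psi (\<theta> + z) p)"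
    by (rule final_grad)
qed

end

theorem proposition5:
  fixes C :: "'a::euclidean_space set" and \<Omega> :: "'a \<Rightarrow> ereal"
  assumes "convex C" and "compact C"
    and "proper_fun \<Omega>" and "elsc \<Omega>" and "econvex \<Omega>"
    and "edom \<Omega> = C"
    and "legendre_in (affine hull C) \<Omega>"
  shows "\<exists>\<Psi> :: 'a \<Rightarrow> ereal.
           (\<forall>x. \<Psi> x \<noteq> -\<infinity>) \<and> legendre \<Psi> \<and>
           C \<subseteq> closure (interior (edom \<Psi>)) \<and>
           interior (edom \<Psi>) \<inter> C \<noteq> {} \<and>
           (\<forall>x. \<Omega> x = \<Psi> x + eindicator C x) \<and>
           edom (fenchel_conj \<Psi>) = UNIV \<and>
           (\<forall>\<theta>. \<exists>z. (\<forall>v \<in> dir (affine hull C). z \<bullet> v = 0) \<and>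
                (\<exists>p. has_grad_in UNIV (fenchel_conj \<Omega>) p \<theta> \<and>
                     has_grad_in UNIV \<Psi> (\<theta> + z) p))"
proof -
  interpret P5 C \<Omega> using assms by unfold_locales
  show ?thesis by (rule main)
qed

end
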